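(* Let $n$ be a prime, let $\alpha$ be a primitive element of $\mathbb{F}_{2^n}$, and identify $\mathbb{F}_2^n$ with $\mathbb{F}_{2^n}$ as $\mathbb{F}_2$-vector spaces. Let $X=\{0,\alpha^{i_1},\dots,\alpha^{i_{2^k-1}}\}$ be a $k$-dimensional subspace with $|\Delta(X)|=(2^k-1)(2^k-2)$, where $\Delta(X)=\{i_r-i_s \bmod (2^n-1) : 1\le r,s\le 2^k-1,\ r\ne s\}$. Then the cyclic shifts $\alpha^jX$, $0\le j\le 2^n-2$, form $2^n-1$ distinct $k$-dimensional subspaces, and the $\frac{(2^k-1)(2^{k-1}-1)}{3}\cdot(2^n-1)$ two-dimensional subspaces contained in these $2^n-1$ subspaces (counted $\frac{(2^k-1)(2^{k-1}-1)}{3}$ per subspace) are all distinct.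
   Context: The exponents $i_r$ are taken in $\mathbb{Z}_{2^n-1}$. The cyclic shift map $\Phi_j$ sends $\alpha^i\mapsto\alpha^{i+j}$ and $0\mapsto 0$. A $k$-dimensional subspace over $\mathbb{F}_2$ contains exactly $\frac{(2^k-1)(2^{k-1}-1)}{3}$ two-dimensional subspaces. *)

theory Defs
  imports "HOL-Computational_Algebra.Primes"
begin

text \<open>An F_2-subspace of a field of characteristic 2: a set containing 0 and closed
  under addition (scalar multiplication by F_2 = {0,1} is automatic).\<close>
definition f2_subspace :: "'a::field set \<Rightarrow> bool" where
  "f2_subspace X \<longleftrightarrow> 0 \<in> X \<and> (\<forall>x\<in>X. \<forall>y\<in>X. x + y \<in> X)"

definition f2_subspace_dim :: "'a::field set \<Rightarrow> nat \<Rightarrow> bool" where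
  "f2_subspace_dim X k \<longleftrightarrow> f2_subspace X \<and> finite X \<and> card X = 2 ^ k"

definition primitive_element :: "'a::field \<Rightarrow> bool" where
  "primitive_element \<alpha> \<longleftrightarrow> \<alpha> \<noteq> 0 \<and> (\<forall>x. x \<noteq> 0 \<longrightarrow> (\<exists>i::nat. x = \<alpha> ^ i))"

definition dlog :: "'a::field \<Rightarrow> 'a \<Rightarrow> nat" where
  "dlog \<alpha> x = (LEAST i. \<alpha> ^ i = x)"

definition diff_set :: "'a::field \<Rightarrow> nat \<Rightarrow> 'a set \<Rightarrow> int set" where
  "diff_set \<alpha> N X = {(int (dlog \<alpha> y) - int (dlog \<alpha> z)) mod int N | y z.
      y \<in> X - {0} \<and> z \<in> X - {0} \<and> y \<noteq> z}"

definition cshift :: "'a::field \<Rightarrow> nat \<Rightarrow> 'a set \<Rightarrow> 'a set" where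
  "cshift \<alpha> j X = (\<lambda>x. \<alpha> ^ j * x) ` X"

definition two_subspaces :: "'a::field set \<Rightarrow> 'a set set" where
  "two_subspaces Y = {V. V \<subseteq> Y \<and> f2_subspace_dim V 2}"

end

theory Submission
  imports Defs
begin


lemma fermat:
  fixes a :: "'a::{field,finite}"
  assumes "a \<noteq> 0"
  shows "a ^ card (UNIV - {0::'a}) = 1"
proof -
  let ?S = "UNIV - {0::'a}"
  have b: "bij_betw (\<lambda>x. a * x) ?S ?S"
    unfolding bij_betw_def
  proof
    show "inj_on (\<lambda>x. a * x) ?S" using assms by (auto simp: inj_on_def)
    show "(\<lambda>x. a * x) ` ?S = ?S"
    proof
      show "(\<lambda>x. a * x) ` ?S \<subseteq> ?S" using assms by auto
      show "?S \<subseteq> (\<lambda>x. a * x) ` ?S"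
      proof
        fix y assume "y \<in> ?S"
        hence "y = a * (y / a)" "y / a \<in> ?S" using assms by auto
        thus "y \<in> (\<lambda>x. a * x) ` ?S" by blast
      qed
    qed
  qed
  have "(\<Prod>x\<in>?S. a * x) = (\<Prod>x\<in>?S. x)" using prod.reindex_bij_betw[OF b, of "\<lambda>x. x"] by simp
  hence "a ^ card ?S * (\<Prod>x\<in>?S. x) = (\<Prod>x\<in>?S. x)" by (simp add: prod.distrib)
  moreover have "(\<Prod>x\<in>?S. x) \<noteq> 0" by simp
  ultimately show ?thesis by simp
qed

lemma card_pairs:
  assumes "finite A"
  shows "card {(y,z). y \<in> A \<and> z \<in> A \<and> y \<noteq> z} = card A * (card A - 1)"
proof -
  have e: "{(y,z). y \<in> A \<and> z \<in> A \<and> y \<noteq> z} = (A \<times> A) - (\<lambda>x. (x,x)) ` A" by auto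
  have "card ((A \<times> A) - (\<lambda>x. (x,x)) ` A) = card A * card A - card A"
    using assms by (subst card_Diff_subset) (auto simp: card_cartesian_product card_image inj_on_def)
  thus ?thesis using e by (simp add: diff_mult_distrib2)
qed

lemma modlem:
  fixes a b d :: nat and M :: int
  assumes "int a mod M = (int b + int d) mod M"
  shows "(int a - int b) mod M = int d mod M"
proof -
  have "(int a - int b) mod M = (int a mod M - int b) mod M" by (simp add: mod_diff_left_eq)
  also have "... = ((int b + int d) mod M - int b) mod M" using assms by simp
  also have "... = ((int b + int d) - int b) mod M" by (simp add: mod_diff_left_eq)
  finally show ?thesis by simp
qed

lemma modlem2:
  fixes N j j' :: nat
  assumes "j < N" "j' < N" "(N - j + j') mod N = 0"
  shows "j = j'"
proof -
  define d where "d = N - j + j'"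
  have d0: "0 < d" "d < 2 * N" using assms by (auto simp: d_def)
  have dq: "d = N * (d div N)" using div_mult_mod_eq[of d N] assms(3) by (simp add: d_def mult.commute)
  have "d div N < 2" using d0 by (simp add: less_mult_imp_div_less)
  moreover have "d div N \<noteq> 0" using dq d0 by (metis mult_0_right less_irrefl)
  ultimately have "d div N = 1" by linarith
  hence "d = N" using dq by simp
  thus ?thesis using assms by (simp add: d_def)
qed


context
  fixes \<alpha> :: "'a::{field,finite}" and N :: nat
  assumes Ndef: "N = card (UNIV - {0::'a})" and prim: "primitive_element \<alpha>"
begin

lemma alpha_nz: "\<alpha> \<noteq> 0" using prim by (simp add: primitive_element_def)

lemma alpha_N: "\<alpha> ^ N = 1" using fermat[OF alpha_nz] Ndef by simp

lemma N_pos: "0 < N"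
proof -
  have "(1::'a) \<in> UNIV - {0}" by simp
  hence "UNIV - {0::'a} \<noteq> {}" by blast
  hence "0 < card (UNIV - {0::'a})" by (metis card_gt_0_iff finite)
  thus ?thesis using Ndef by simp
qed

lemma pow_mod: "\<alpha> ^ a = \<alpha> ^ (a mod N)"
proof -
  have "\<alpha> ^ (N * (a div N) + a mod N) = (\<alpha> ^ N) ^ (a div N) * \<alpha> ^ (a mod N)" by (simp only: power_add power_mult)
  thus ?thesis using alpha_N by (simp only: mult_div_mod_eq power_one mult_1)
qed

lemma img: "(\<lambda>i. \<alpha> ^ i) ` {..<N} = UNIV - {0}"
proof
  show "(\<lambda>i. \<alpha> ^ i) ` {..<N} \<subseteq> UNIV - {0}" using alpha_nz by auto
  show "UNIV - {0} \<subseteq> (\<lambda>i. \<alpha> ^ i) ` {..<N}"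
  proof
    fix x assume "x \<in> (UNIV::'a set) - {0}"
    then obtain i where "x = \<alpha> ^ i" using prim by (auto simp: primitive_element_def)
    hence "x = \<alpha> ^ (i mod N)" using pow_mod by simp
    moreover have "i mod N < N" using N_pos by simp
    ultimately show "x \<in> (\<lambda>i. \<alpha> ^ i) ` {..<N}" by blast
  qed
qed

lemma inj: "inj_on (\<lambda>i. \<alpha> ^ i) {..<N}"
proof (rule eq_card_imp_inj_on)
  show "card ((\<lambda>i. \<alpha> ^ i) ` {..<N}) = card {..<N}" unfolding img using Ndef by simp
qed simp

lemma pow_eq: "\<alpha> ^ a = \<alpha> ^ b \<Longrightarrow> a mod N = b mod N"
  using inj_onD[OF inj, of "a mod N" "b mod N"] pow_mod[of a] pow_mod[of b] N_pos by simp

lemma dlog: assumes "x \<noteq> 0" shows "\<alpha> ^ dlog \<alpha> x = x" "dlog \<alpha> x < N"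
proof -
  obtain i where i: "i < N" "\<alpha> ^ i = x" using img assms by (metis DiffI UNIV_I imageE lessThan_iff singletonD)
  show "\<alpha> ^ dlog \<alpha> x = x" unfolding dlog_def by (rule LeastI[of _ i]) (rule i(2))
  have "dlog \<alpha> x \<le> i" unfolding dlog_def by (rule Least_le) (rule i(2))
  thus "dlog \<alpha> x < N" using i by simp
qed

lemma dlog_shift:
  assumes "x \<noteq> 0"
  shows "(int (dlog \<alpha> (\<alpha> ^ d * x)) - int (dlog \<alpha> x)) mod int N = int d mod int N"
proof -
  have nz: "\<alpha> ^ d * x \<noteq> 0" using assms alpha_nz by simp
  have "\<alpha> ^ dlog \<alpha> (\<alpha> ^ d * x) = \<alpha> ^ (dlog \<alpha> x + d)"
    using dlog(1)[OF nz] dlog(1)[OF assms] by (simp add: power_add mult.commute)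
  hence "dlog \<alpha> (\<alpha> ^ d * x) mod N = (dlog \<alpha> x + d) mod N" by (rule pow_eq)
  hence "int (dlog \<alpha> (\<alpha> ^ d * x)) mod int N = (int (dlog \<alpha> x) + int d) mod int N"
    by (metis of_nat_add zmod_int)
  thus ?thesis by (rule modlem)
qed

lemma core:
  assumes fin: "finite X"
    and cd: "card (diff_set \<alpha> N X) = card (X - {0}) * (card (X - {0}) - 1)"
    and xy: "x \<in> X - {0}" "y \<in> X - {0}" "x \<noteq> y"
    and sh: "\<alpha> ^ d * x \<in> X" "\<alpha> ^ d * y \<in> X"
  shows "d mod N = 0"
proof (rule ccontr)
  assume dn: "d mod N \<noteq> 0"
  define P where "P = {(y,z). y \<in> X - {0} \<and> z \<in> X - {0} \<and> y \<noteq> z}"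
  define g where "g = (\<lambda>(y,z). (int (dlog \<alpha> y) - int (dlog \<alpha> z)) mod int N)"
  have ds: "diff_set \<alpha> N X = g ` P" unfolding diff_set_def g_def P_def by auto
  have "card (g ` P) = card P" using cd ds card_pairs[of "X - {0}"] fin by (simp add: P_def)
  hence ig: "inj_on g P" using fin by (intro eq_card_imp_inj_on) (auto simp: P_def)
  have ne: "\<alpha> ^ d * z \<noteq> z" if "z \<noteq> 0" for z
  proof
    assume "\<alpha> ^ d * z = z"
    hence "\<alpha> ^ d = \<alpha> ^ 0" using that by simp
    hence "d mod N = 0 mod N" by (rule pow_eq)
    thus False using dn by simp
  qed
  have p1: "(\<alpha> ^ d * x, x) \<in> P" using xy sh ne alpha_nz by (auto simp: P_def)
  have p2: "(\<alpha> ^ d * y, y) \<in> P" using xy sh ne alpha_nz by (auto simp: P_def)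
  have "g (\<alpha> ^ d * x, x) = g (\<alpha> ^ d * y, y)" using dlog_shift xy by (simp add: g_def)
  hence "(\<alpha> ^ d * x, x) = (\<alpha> ^ d * y, y)" using inj_onD[OF ig] p1 p2 by blast
  thus False using xy by simp
qed

lemma mem_cshift:
  assumes "j \<le> N"
  shows "u \<in> cshift \<alpha> j X \<longleftrightarrow> \<alpha> ^ (N - j) * u \<in> X"
proof
  have e: "\<alpha> ^ (N - j) * \<alpha> ^ j = 1" using assms alpha_N by (simp add: power_add[symmetric])
  assume "u \<in> cshift \<alpha> j X"
  then obtain x where "x \<in> X" "u = \<alpha> ^ j * x" by (auto simp: cshift_def)
  thus "\<alpha> ^ (N - j) * u \<in> X" using e by (simp add: mult.assoc[symmetric])
next
  have e: "\<alpha> ^ j * \<alpha> ^ (N - j) = 1" using assms alpha_N by (simp add: power_add[symmetric])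
  assume "\<alpha> ^ (N - j) * u \<in> X"
  moreover have "u = \<alpha> ^ j * (\<alpha> ^ (N - j) * u)" using e by (simp add: mult.assoc[symmetric])
  ultimately show "u \<in> cshift \<alpha> j X" unfolding cshift_def by blast
qed


lemma allshift:
  assumes fin: "finite X"
    and cd: "card (diff_set \<alpha> N X) = card (X - {0}) * (card (X - {0}) - 1)"
    and ne: "X - {0} \<noteq> {}"
    and sh: "\<forall>x\<in>X - {0}. \<alpha> ^ d * x \<in> X"
  shows "d mod N = 0"
proof (cases "\<exists>x\<in>X - {0}. \<exists>y\<in>X - {0}. x \<noteq> y")
  case True
  then obtain x y where "x \<in> X - {0}" "y \<in> X - {0}" "x \<noteq> y" by blast
  thus ?thesis using core[OF fin cd] sh by blast
next
  case False
  obtain x where x: "x \<in> X - {0}" using ne by blast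
  have "\<alpha> ^ d * x \<in> X - {0}" using sh x alpha_nz by auto
  hence "\<alpha> ^ d * x = x" using False x by blast
  hence "\<alpha> ^ d = \<alpha> ^ 0" using x by simp
  hence "d mod N = 0 mod N" by (rule pow_eq)
  thus ?thesis by simp
qed

end



lemma char2:
  assumes "odd (card (UNIV - {0::'a::{field,finite}}))"
  shows "(x::'a) + x = 0"
proof -
  have "(-1::'a) ^ card (UNIV - {0::'a}) = 1" by (rule fermat) simp
  moreover have "(-1::'a) ^ card (UNIV - {0::'a}) = -1" using assms by (rule neg_one_odd_power)
  ultimately have m: "(-1::'a) = 1" by simp
  have "(1::'a) + 1 = 1 + (-1)" using m by simp
  hence two0: "(1::'a) + 1 = 0" by simp
  have "x + x = x * (1 + 1)" by (simp add: distrib_left)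
  thus ?thesis using two0 by simp
qed

lemma shift_dim:
  fixes c :: "'a::field"
  assumes "c \<noteq> 0" "f2_subspace_dim X k"
  shows "f2_subspace_dim ((\<lambda>x. c * x) ` X) k"
proof -
  have X: "0 \<in> X" "\<And>a b. a \<in> X \<Longrightarrow> b \<in> X \<Longrightarrow> a + b \<in> X" "finite X" "card X = 2 ^ k"
    using assms(2) unfolding f2_subspace_dim_def f2_subspace_def by auto
  have inj: "inj_on (\<lambda>x. c * x) X" using assms(1) by (auto simp: inj_on_def)
  have "f2_subspace ((\<lambda>x. c * x) ` X)"
    unfolding f2_subspace_def
  proof
    have "c * 0 = 0" by simp
    thus "0 \<in> (\<lambda>x. c * x) ` X" using X(1) by (metis image_eqI)
    show "\<forall>x\<in>(\<lambda>x. c * x) ` X. \<forall>y\<in>(\<lambda>x. c * x) ` X. x + y \<in> (\<lambda>x. c * x) ` X"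
    proof (intro ballI)
      fix x y assume "x \<in> (\<lambda>x. c * x) ` X" "y \<in> (\<lambda>x. c * x) ` X"
      then obtain a b where ab: "a \<in> X" "b \<in> X" "x = c * a" "y = c * b" by blast
      hence "a + b \<in> X" using X(2) by blast
      moreover have "x + y = c * (a + b)" using ab by (simp add: distrib_left)
      ultimately show "x + y \<in> (\<lambda>x. c * x) ` X" by blast
    qed
  qed
  moreover have "card ((\<lambda>x. c * x) ` X) = 2 ^ k" using card_image[OF inj] X(4) by simp
  ultimately show ?thesis using X(3) unfolding f2_subspace_dim_def by simp
qed


lemma quad:
  fixes a b :: "'a::field"
  assumes c2: "\<And>x::'a. x + x = 0" and "a \<noteq> 0" "b \<noteq> 0" "a \<noteq> b"
  shows "f2_subspace {0, a, b, a + b}" "card {0, a, b, a + b} = 4"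
proof -
  have c3: "x + (x + y) = y" for x y :: 'a by (subst add.assoc[symmetric]) (simp only: c2 add_0_left)
  have "a + b \<noteq> 0"
  proof
    assume "a + b = 0" hence "a + (a + b) = a" by simp
    thus False using c3 assms by simp
  qed
  moreover have "a + b \<noteq> a" "a + b \<noteq> b" using assms by auto
  ultimately show "card {0, a, b, a + b} = 4" using assms by auto
  have e1: "a + (a + b) = b" by (rule c3)
  have e2: "b + (a + b) = a" by (simp only: add.commute[of a b] c3)
  have e3: "(a + b) + a = b" by (simp only: add.commute[of "a+b" a] c3)
  have e4: "(a + b) + b = a" by (simp only: add.assoc c2 add_0_right)
  have e5: "b + a = a + b" by (rule add.commute)
  show "f2_subspace {0, a, b, a + b}"
    unfolding f2_subspace_def
    by (simp only: c2 e1 e2 e3 e4 e5 ball_simps insert_iff simp_thms add_0_left add_0_right empty_iff)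
qed

lemma eqV:
  fixes V :: "'a::field set"
  assumes c2: "\<And>x::'a. x + x = 0" and V: "f2_subspace_dim V 2"
    and ab: "a \<in> V - {0}" "b \<in> V - {0}" "a \<noteq> b"
  shows "V = {0, a, b, a + b}"
proof -
  have sub: "{0, a, b, a + b} \<subseteq> V" using V ab by (auto simp: f2_subspace_dim_def f2_subspace_def)
  have "card {0, a, b, a + b} = card V" using quad(2)[OF c2, of a b] ab V by (simp add: f2_subspace_dim_def)
  thus ?thesis using card_subset_eq[OF _ sub] V by (simp add: f2_subspace_dim_def)
qed



lemma arith3: "(m::nat) * (2 * q) = 6 * c \<Longrightarrow> m * q = 3 * c"
proof -
  assume h: "m * (2 * q) = 6 * c"
  have a: "m * (2 * q) = 2 * (m * q)" by (rule mult.left_commute)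
  have b: "6 * c = 2 * (3 * c)" by simp
  have "2 * (m * q) = 2 * (3 * c)" using h unfolding a b .
  thus ?thesis by simp
qed

lemma count2:
  fixes Y :: "'a::field set"
  assumes c2: "\<And>x::'a. x + x = 0" and Y: "f2_subspace_dim Y k" and k: "k \<ge> 1"
  shows "card (two_subspaces Y) = (2 ^ k - 1) * (2 ^ (k - 1) - 1) div 3"
proof -
  define T where "T = two_subspaces Y"
  define fib where "fib = (\<lambda>V::'a set. {(a,b). a \<in> V - {0} \<and> b \<in> V - {0} \<and> a \<noteq> b})"
  define P where "P = fib Y"
  have finY: "finite Y" and z: "0 \<in> Y" using Y by (auto simp: f2_subspace_dim_def f2_subspace_def)
  have cA: "card (Y - {0}) = 2 ^ k - 1" using Y z by (simp add: f2_subspace_dim_def)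
  have cP: "card P = (2 ^ k - 1) * (2 ^ k - 1 - 1)" unfolding P_def fib_def
    using card_pairs[of "Y - {0}"] finY cA by simp
  have finT: "finite T" unfolding T_def two_subspaces_def using finY
    by (rule finite_subset[rotated, OF finite_Pow_iff[THEN iffD2]]) auto
  have PU: "P = (\<Union>V\<in>T. fib V)"
  proof
    show "P \<subseteq> (\<Union>V\<in>T. fib V)"
    proof
      fix p assume "p \<in> P"
      then obtain a b where p: "p = (a,b)" "a \<in> Y - {0}" "b \<in> Y - {0}" "a \<noteq> b"
        by (auto simp: P_def fib_def)
      have "{0, a, b, a + b} \<in> T" unfolding T_def two_subspaces_def f2_subspace_dim_def
        using quad[OF c2, of a b] p Y by (auto simp: f2_subspace_dim_def f2_subspace_def)
      moreover have "p \<in> fib {0, a, b, a + b}" using p by (auto simp: fib_def)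
      ultimately show "p \<in> (\<Union>V\<in>T. fib V)" by blast
    qed
    show "(\<Union>V\<in>T. fib V) \<subseteq> P" by (auto simp: T_def two_subspaces_def fib_def P_def)
  qed
  have disj: "\<forall>V\<in>T. \<forall>W\<in>T. V \<noteq> W \<longrightarrow> fib V \<inter> fib W = {}"
  proof (intro ballI impI)
    fix V W assume VW: "V \<in> T" "W \<in> T" "V \<noteq> W"
    show "fib V \<inter> fib W = {}"
    proof (rule ccontr)
      assume "fib V \<inter> fib W \<noteq> {}"
      then obtain a b where "a \<in> V - {0}" "b \<in> V - {0}" "a \<in> W - {0}" "b \<in> W - {0}" "a \<noteq> b"
        by (auto simp: fib_def)
      hence "V = {0, a, b, a + b}" "W = {0, a, b, a + b}"
        using eqV[OF c2] VW by (auto simp: T_def two_subspaces_def)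
      thus False using VW by simp
    qed
  qed
  have cf: "card (fib V) = 6" if "V \<in> T" for V
  proof -
    have "finite V" "card V = 4" "0 \<in> V" using that
      by (auto simp: T_def two_subspaces_def f2_subspace_dim_def f2_subspace_def)
    hence "card (V - {0}) = 3" by simp
    thus ?thesis unfolding fib_def using card_pairs[of "V - {0}"] \<open>finite V\<close> by simp
  qed
  have finf: "finite (fib V)" if "V \<in> T" for V using cf[OF that] card_ge_0_finite by force
  have "card P = (\<Sum>V\<in>T. card (fib V))" unfolding PU using finT finf disj by (intro card_UN_disjoint) auto
  also have "... = 6 * card T" using cf by simp
  finally have e: "(2 ^ k - 1) * (2 ^ k - 1 - 1) = 6 * card T" using cP by simp
  obtain m where km: "k = Suc m" using k by (cases k) auto
  have h: "(2::nat) ^ k - 1 - 1 = 2 * (2 ^ (k - 1) - 1)" unfolding km by (simp add: diff_mult_distrib2)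
  have "(2 ^ k - 1) * (2 * (2 ^ (k - 1) - 1)) = 6 * card T" using e[unfolded h] .
  hence "(2 ^ k - 1) * (2 ^ (k - 1) - 1) = 3 * card T" by (rule arith3)
  thus ?thesis unfolding T_def by simp
qed






theorem lemma7:
  fixes \<alpha> :: "'a::{field,finite}" and X :: "'a set" and n k :: nat
  assumes "prime n"
    and "card (UNIV :: 'a set) = 2 ^ n"
    and "primitive_element \<alpha>"
    and "k \<ge> 1"
    and "f2_subspace_dim X k"
    and "card (diff_set \<alpha> (2 ^ n - 1) X) = (2 ^ k - 1) * (2 ^ k - 2)"
  shows "(\<forall>j < 2 ^ n - 1. f2_subspace_dim (cshift \<alpha> j X) k)
       \<and> inj_on (\<lambda>j. cshift \<alpha> j X) {..< 2 ^ n - 1}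
       \<and> (\<forall>j < 2 ^ n - 1. \<forall>j' < 2 ^ n - 1. j \<noteq> j' \<longrightarrow>
            two_subspaces (cshift \<alpha> j X) \<inter> two_subspaces (cshift \<alpha> j' X) = {})
       \<and> card (\<Union>j < 2 ^ n - 1. two_subspaces (cshift \<alpha> j X))
           = ((2 ^ k - 1) * (2 ^ (k - 1) - 1) div 3) * (2 ^ n - 1)"

proof -
  let ?N = "2 ^ n - 1 :: nat"
  have n2: "n \<ge> 2" using assms(1) by (rule prime_ge_2_nat)
  have cS: "card (UNIV - {0::'a}) = ?N" using assms(2) by (simp add: card_Diff_singleton)
  hence Nd: "?N = card (UNIV - {0::'a})" by simp
  obtain m where nm: "n = Suc m" using n2 by (cases n) auto
  have oddl: "0 < y \<Longrightarrow> odd (2 * (y::nat) - 1)" for y by presburger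
  have "odd ?N" unfolding nm using oddl[of "2 ^ m"] by simp
  hence c2: "\<And>x::'a. x + x = 0" using char2 cS by metis
  have Xs: "finite X" "0 \<in> X" "card X = 2 ^ k" using assms(5) by (auto simp: f2_subspace_dim_def f2_subspace_def)
  have cX0: "card (X - {0}) = 2 ^ k - 1" using Xs by simp
  have cd: "card (diff_set \<alpha> ?N X) = card (X - {0}) * (card (X - {0}) - 1)"
    unfolding cX0 assms(6) by (simp add: numeral_2_eq_2)
  have X0ne: "X - {0} \<noteq> {}"
  proof
    assume "X - {0} = {}" hence "card (X - {0}) = 0" by simp
    moreover have "(2::nat) ^ k \<ge> 2" using assms(4) by (metis power_one_right power_increasing one_le_numeral)
    ultimately show False using cX0 by simp
  qed
  have anz: "\<alpha> \<noteq> 0" by (rule alpha_nz[OF Nd assms(3)])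
  have aN: "\<alpha> ^ ?N = 1" by (rule alpha_N[OF Nd assms(3)])
  have P1: "\<forall>j < ?N. f2_subspace_dim (cshift \<alpha> j X) k"
  proof (intro allI impI)
    fix j :: nat
    show "f2_subspace_dim (cshift \<alpha> j X) k" unfolding cshift_def
      by (rule shift_dim) (use anz assms(5) in simp_all)
  qed
  have P2: "inj_on (\<lambda>j. cshift \<alpha> j X) {..< ?N}"
  proof (rule inj_onI)
    fix j j' assume jj: "j \<in> {..<?N}" "j' \<in> {..<?N}" and eq: "cshift \<alpha> j X = cshift \<alpha> j' X"
    have "\<forall>x\<in>X - {0}. \<alpha> ^ (?N - j + j') * x \<in> X"
    proof
      fix x assume x: "x \<in> X - {0}"
      have "\<alpha> ^ j' * x \<in> cshift \<alpha> j' X" unfolding cshift_def using x by blast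
      hence "\<alpha> ^ j' * x \<in> cshift \<alpha> j X" using eq by simp
      hence "\<alpha> ^ (?N - j) * (\<alpha> ^ j' * x) \<in> X" using mem_cshift[OF Nd assms(3)] jj by simp
      thus "\<alpha> ^ (?N - j + j') * x \<in> X" by (simp add: power_add mult.assoc)
    qed
    hence "(?N - j + j') mod ?N = 0" using allshift[OF Nd assms(3) Xs(1) cd X0ne] by blast
    thus "j = j'" using modlem2 jj by simp
  qed
  have P3: "\<forall>j < ?N. \<forall>j' < ?N. j \<noteq> j' \<longrightarrow>
            two_subspaces (cshift \<alpha> j X) \<inter> two_subspaces (cshift \<alpha> j' X) = {}"
  proof (intro allI impI)
    fix j j' assume j: "j < ?N" and j': "j' < ?N" and ne: "j \<noteq> j'"
    show "two_subspaces (cshift \<alpha> j X) \<inter> two_subspaces (cshift \<alpha> j' X) = {}"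
    proof (rule ccontr)
      assume "two_subspaces (cshift \<alpha> j X) \<inter> two_subspaces (cshift \<alpha> j' X) \<noteq> {}"
      then obtain V where V1: "V \<subseteq> cshift \<alpha> j X" and V2: "V \<subseteq> cshift \<alpha> j' X"
        and V: "f2_subspace_dim V 2" by (auto simp: two_subspaces_def)
      have "finite V" "0 \<in> V" "card V = 4" using V by (auto simp: f2_subspace_dim_def f2_subspace_def)
      hence "card (V - {0}) = 3" by simp
      then obtain u v w where uvw: "V - {0} = {u, v, w}" "u \<noteq> v" by (auto simp: card_3_iff)
      have uv: "u \<in> V" "v \<in> V" "u \<noteq> 0" "v \<noteq> 0" using uvw by blast+
      define x where "x = \<alpha> ^ (?N - j') * u"
      define y where "y = \<alpha> ^ (?N - j') * v"
      have mc: "\<And>jj z. jj \<le> ?N \<Longrightarrow> z \<in> cshift \<alpha> jj X \<longleftrightarrow> \<alpha> ^ (?N - jj) * z \<in> X"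
        using mem_cshift[OF Nd assms(3)] by blast
      have xX: "x \<in> X" "y \<in> X" using mc[of j'] j' V2 uv by (auto simp: x_def y_def)
      have xnz: "x \<noteq> 0" "y \<noteq> 0" "x \<noteq> y" using uv uvw anz by (auto simp: x_def y_def)
      have one: "\<alpha> ^ j' * \<alpha> ^ (?N - j') = 1" using aN j' by (simp add: power_add[symmetric])
      have sh: "\<alpha> ^ (?N - j + j') * z' = \<alpha> ^ (?N - j) * z" if "z' = \<alpha> ^ (?N - j') * z" for z z'
      proof -
        have "\<alpha> ^ (?N - j + j') * z' = (\<alpha> ^ (?N - j) * \<alpha> ^ j') * (\<alpha> ^ (?N - j') * z)"
          by (simp only: that power_add)
        also have "... = \<alpha> ^ (?N - j) * ((\<alpha> ^ j' * \<alpha> ^ (?N - j')) * z)"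
          by (simp only: mult.assoc)
        also have "... = \<alpha> ^ (?N - j) * z" by (simp only: one mult_1_left)
        finally show ?thesis .
      qed
      have "u \<in> cshift \<alpha> j X" "v \<in> cshift \<alpha> j X" using V1 uv by blast+
      hence "\<alpha> ^ (?N - j) * u \<in> X" "\<alpha> ^ (?N - j) * v \<in> X" using mc[of j] j by simp_all
      hence h1: "\<alpha> ^ (?N - j + j') * x \<in> X" "\<alpha> ^ (?N - j + j') * y \<in> X"
        unfolding sh[OF x_def] sh[OF y_def] .
      have "x \<in> X - {0}" "y \<in> X - {0}" using xX xnz by auto
      hence "(?N - j + j') mod ?N = 0"
        by (rule core[OF Nd assms(3) Xs(1) cd _ _ xnz(3) h1])
      hence "j = j'" by (rule modlem2[OF j j'])
      thus False using ne by simp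
    qed
  qed
  define c where "c = (2 ^ k - 1) * (2 ^ (k - 1) - 1) div (3::nat)"
  have cj: "card (two_subspaces (cshift \<alpha> j X)) = c" if "j < ?N" for j
    using count2[OF c2 P1[rule_format, OF that] assms(4)] unfolding c_def .
  have "card (\<Union>j < ?N. two_subspaces (cshift \<alpha> j X)) = (\<Sum>j<?N. card (two_subspaces (cshift \<alpha> j X)))"
    by (rule card_UN_disjoint) (use P3 in auto)
  also have "... = (\<Sum>j<?N. c)" by (rule sum.cong) (simp_all add: cj)
  also have "... = ?N * c" by simp
  finally have P4: "card (\<Union>j < ?N. two_subspaces (cshift \<alpha> j X)) = c * ?N" by simp
  show ?thesis using P1 P2 P3 P4 unfolding c_def by blast
qed


end
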